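(* Let $G$ be a simple undirected connected graph on vertices $u_1,\dots,u_n$ with Laplacian $L$, let $u_a\neq u_b$ satisfy $N(u_a)\setminus\{u_b\}=N(u_b)\setminus\{u_a\}$, let $M=(\mathbf e_a-\mathbf e_b)(\mathbf e_a-\mathbf e_b)^T$, $\alpha\in\mathbb R$ and $L^\alpha=L+\alpha M$. Suppose $L$ is periodic at vertex $u_p$ at time $\tau\neq 0$. Then: (1) if $p\in\{a,b\}$ and $2\alpha\tau\in\pi(2\mathbb Z+1)$, then $L^\alpha$ exhibits perfect state transfer between $u_a$ and $u_b$ at time $\tau$; (2) if $p\notin\{a,b\}$, then $L^\alpha$ is periodic at $u_p$ at time $\tau$. *)

theory Defs
  imports "HOL-Analysis.Analysis"
begin

definition simple_graph :: "('n \<Rightarrow> 'n \<Rightarrow> bool) \<Rightarrow> bool" where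
  "simple_graph E \<longleftrightarrow> (\<forall>x y. E x y \<longleftrightarrow> E y x) \<and> (\<forall>x. \<not> E x x)"

definition connected_graph :: "('n \<Rightarrow> 'n \<Rightarrow> bool) \<Rightarrow> bool" where
  "connected_graph E \<longleftrightarrow> (\<forall>x y. E\<^sup>*\<^sup>* x y)"

definition nbhd :: "('n \<Rightarrow> 'n \<Rightarrow> bool) \<Rightarrow> 'n \<Rightarrow> 'n set" where
  "nbhd E x = {y. E x y}"

definition laplacian :: "('n::finite \<Rightarrow> 'n \<Rightarrow> bool) \<Rightarrow> real^'n^'n" where
  "laplacian E = (\<chi> i j. if i = j then real (card {k. E i k}) else (if E i j then -1 else 0))"

definition ebasis :: "'n::finite \<Rightarrow> real^'n" where
  "ebasis a = (\<chi> i. if i = a then 1 else 0)"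

definition outer :: "real^'n \<Rightarrow> real^'n \<Rightarrow> real^'n^'n" where
  "outer x y = (\<chi> i j. x $ i * y $ j)"

fun mpow :: "'a::comm_ring_1^'n::finite^'n \<Rightarrow> nat \<Rightarrow> 'a^'n^'n" where
  "mpow A 0 = mat 1"
| "mpow A (Suc k) = A ** mpow A k"

definition mexp :: "complex^'n::finite^'n \<Rightarrow> complex^'n^'n" where
  "mexp A = (\<chi> i j. \<Sum>k. mpow A k $ i $ j / of_nat (fact k))"

text \<open>Transition matrix of the continuous-time quantum walk: U(t) = exp(-i t H).\<close>
definition transition :: "real^'n::finite^'n \<Rightarrow> real \<Rightarrow> complex^'n^'n" where
  "transition H t = mexp (\<chi> i j. - \<i> * complex_of_real t * complex_of_real (H $ i $ j))"

definition periodic_at :: "real^'n::finite^'n \<Rightarrow> 'n \<Rightarrow> real \<Rightarrow> bool" where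
  "periodic_at H u t \<longleftrightarrow> cmod (transition H t $ u $ u) = 1"

definition pst :: "real^'n::finite^'n \<Rightarrow> 'n \<Rightarrow> 'n \<Rightarrow> real \<Rightarrow> bool" where
  "pst H u v t \<longleftrightarrow> cmod (transition H t $ u $ v) = 1"

end

theory Submission imports Defs begin
lemma sum_vv:
  fixes f :: "'n::finite \<Rightarrow> 'a::comm_ring_1"
  assumes "a \<noteq> b"
  shows "(\<Sum>m\<in>UNIV. f m * ((if m = a then 1 else 0) - (if m = b then 1 else 0))) = f a - f b"
proof -
  have "(\<Sum>m\<in>UNIV. f m * ((if m = a then 1 else 0) - (if m = b then 1 else 0)))
     = (\<Sum>m\<in>UNIV. (if m = a then f m else 0)) - (\<Sum>m\<in>UNIV. (if m = b then f m else 0))"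
    by (simp add: right_diff_distrib sum_subtractf if_distrib[of "\<lambda>x. f _ * x"] cong: if_cong)
  also have "\<dots> = f a - f b" by (simp add: sum.delta')
  finally show ?thesis .
qed

lemma mpow_scale:
  fixes H :: "real^'n::finite^'n"
  shows "mpow (\<chi> i j. c * complex_of_real (H $ i $ j)) k = (\<chi> i j. c ^ k * complex_of_real (mpow H k $ i $ j))"
proof (induction k)
  case 0 show ?case by (simp add: vec_eq_iff mat_def)
next
  case (Suc k)
  show ?case
    by (simp add: Suc vec_eq_iff matrix_matrix_mult_def sum_distrib_left algebra_simps)
qed

lemma mpow_bound:
  fixes H :: "real^'n::finite^'n"
  shows "\<bar>mpow H k $ i $ j\<bar> \<le> (\<Sum>i\<in>UNIV. \<Sum>j\<in>UNIV. \<bar>H $ i $ j\<bar>) ^ k"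
proof (induction k arbitrary: i j)
  case 0 show ?case by (simp add: mat_def)
next
  case (Suc k)
  define m where "m = (\<Sum>i\<in>UNIV. \<Sum>j\<in>UNIV. \<bar>H $ i $ j\<bar>)"
  have row: "(\<Sum>l\<in>UNIV. \<bar>H $ i $ l\<bar>) \<le> m"
    unfolding m_def by (rule member_le_sum) (auto intro: sum_nonneg)
  have m0: "0 \<le> m" unfolding m_def by (auto intro: sum_nonneg)
  have "\<bar>mpow H (Suc k) $ i $ j\<bar> = \<bar>\<Sum>l\<in>UNIV. H $ i $ l * mpow H k $ l $ j\<bar>"
    by (simp add: matrix_matrix_mult_def)
  also have "\<dots> \<le> (\<Sum>l\<in>UNIV. \<bar>H $ i $ l\<bar> * m ^ k)"
    by (rule order_trans[OF sum_abs]) (auto intro!: sum_mono mult_left_mono simp: abs_mult Suc[unfolded m_def[symmetric]])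
  also have "\<dots> = (\<Sum>l\<in>UNIV. \<bar>H $ i $ l\<bar>) * m ^ k" by (simp add: sum_distrib_right)
  also have "\<dots> \<le> m * m ^ k" using row m0 by (auto intro!: mult_right_mono)
  finally show ?case by (simp add: m_def)
qed

lemma summ:
  fixes H :: "real^'n::finite^'n"
  shows "summable (\<lambda>k. c ^ k * complex_of_real (mpow H k $ i $ j) / of_nat (fact k))"
proof -
  define m where "m = (\<Sum>i\<in>UNIV. \<Sum>j\<in>UNIV. \<bar>H $ i $ j\<bar>)"
  have "summable (\<lambda>k. (cmod c * m) ^ k /\<^sub>R fact k)"
    using exp_converges sums_summable by blast
  then show ?thesis
  proof (rule summable_comparison_test'[where N=0])
    fix k :: nat
    have "norm (c ^ k * complex_of_real (mpow H k $ i $ j) / of_nat (fact k))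
        = cmod c ^ k * \<bar>mpow H k $ i $ j\<bar> / fact k"
      by (simp add: norm_mult norm_divide norm_power)
    also have "\<dots> \<le> cmod c ^ k * m ^ k / fact k"
      using mpow_bound[of H k i j] by (auto intro!: divide_right_mono mult_left_mono simp: m_def)
    finally show "norm (c ^ k * complex_of_real (mpow H k $ i $ j) / of_nat (fact k)) \<le> (cmod c * m) ^ k /\<^sub>R fact k"
      by (simp add: power_mult_distrib divide_inverse_commute)
  qed
qed

lemma trans_entry:
  fixes H :: "real^'n::finite^'n"
  shows "(\<lambda>k. (-\<i> * complex_of_real t) ^ k * complex_of_real (mpow H k $ i $ j) / of_nat (fact k)) sums (transition H t $ i $ j)"
  using summ[of "-\<i> * complex_of_real t" H i j]
  unfolding transition_def mexp_def vec_lambda_beta mpow_scale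
  by (rule summable_sums)

lemma exp_sums:
  fixes z :: complex
  shows "(\<lambda>k. z ^ k * complex_of_real (l ^ k) / of_nat (fact k)) sums exp (z * complex_of_real l)"
  using exp_converges[of "z * complex_of_real l"]
  by (simp add: power_mult_distrib scaleR_conv_of_real divide_inverse_commute mult_ac)

lemma odd_exp:
  fixes k :: int and x :: real
  assumes "x = pi * (2 * real_of_int k + 1)"
  shows "exp (- (\<i> * complex_of_real x)) = -1"
proof -
  have "of_int (-k-1) \<in> (\<int>::real set)" by simp
  from exp_integer_2pi_plus1[OF this]
  have "exp (complex_of_real ((2 * of_int (-k-1) + 1) * pi) * \<i>) = -1" .
  moreover have "complex_of_real ((2 * of_int (-k-1) + 1) * pi) * \<i> = - (\<i> * complex_of_real x)"
    using assms by (simp add: algebra_simps)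
  ultimately show ?thesis by simp
qed

theorem theorem2p4:
  fixes E :: "'n::finite \<Rightarrow> 'n \<Rightarrow> bool"
    and a b p :: 'n and \<alpha> \<tau> :: real
  assumes "simple_graph E" and "connected_graph E"
    and "a \<noteq> b"
    and "nbhd E a - {b} = nbhd E b - {a}"
    and "periodic_at (laplacian E) p \<tau>" and "\<tau> \<noteq> 0"
  shows "(p \<in> {a, b} \<and> (\<exists>k::int. 2 * \<alpha> * \<tau> = pi * (2 * k + 1)) \<longrightarrow>
            pst (laplacian E + \<alpha> *\<^sub>R outer (ebasis a - ebasis b) (ebasis a - ebasis b)) a b \<tau>)
       \<and> (p \<notin> {a, b} \<longrightarrow>
            periodic_at (laplacian E + \<alpha> *\<^sub>R outer (ebasis a - ebasis b) (ebasis a - ebasis b)) p \<tau>)"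
proof -
  note ab = \<open>a \<noteq> b\<close>
  define Ld where "Ld = laplacian E"
  define Ha where "Ha = laplacian E + \<alpha> *\<^sub>R outer (ebasis a - ebasis b) (ebasis a - ebasis b)"
  define vv :: "'n \<Rightarrow> real" where "vv m = (if m = a then 1 else 0) - (if m = b then 1 else 0)" for m
  have sv: "(\<Sum>m\<in>UNIV. f m * vv m) = f a - f b" for f :: "'n \<Rightarrow> real"
    unfolding vv_def using sum_vv[OF ab] .
  have sv': "(\<Sum>m\<in>UNIV. vv m * f m) = f a - f b" for f :: "'n \<Rightarrow> real"
    using sv[of f] by (simp add: mult.commute)
  have va: "vv a = 1" and vb: "vv b = -1" using ab by (auto simp: vv_def)
  have Ha_e: "Ha $ i $ j = Ld $ i $ j + \<alpha> * (vv i * vv j)" for i j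
    by (simp add: Ha_def Ld_def outer_def ebasis_def vv_def)
  have symE: "E x y \<longleftrightarrow> E y x" for x y using assms(1) by (auto simp: simple_graph_def)
  have irr: "\<not> E x x" for x using assms(1) by (auto simp: simple_graph_def)
  have Ld_sym: "Ld $ i $ j = Ld $ j $ i" for i j
    by (simp add: Ld_def laplacian_def symE)
  define lam where "lam = real (card {k. E a k}) + (if E a b then 1 else 0)"
  have tw: "E a i \<longleftrightarrow> E b i" if "i \<noteq> a" "i \<noteq> b" for i
    using assms(4) that unfolding nbhd_def by (auto simp: set_eq_iff)
  have deg: "card {k. E a k} = card {k. E b k}"
  proof (cases "E a b")
    case True
    have "{k. E a k} = insert b ({k. E a k} - {b})" using True by auto
    moreover have "{k. E b k} = insert a ({k. E b k} - {a})" using True symE by auto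
    moreover have "{k. E a k} - {b} = {k. E b k} - {a}" using assms(4) by (simp add: nbhd_def)
    ultimately show ?thesis
      by (metis (no_types, lifting) card_insert_disjoint finite Diff_iff insertI1)
  next
    case False
    then have "{k. E a k} = {k. E a k} - {b}" "{k. E b k} = {k. E b k} - {a}" using symE by auto
    then show ?thesis using assms(4) by (simp add: nbhd_def)
  qed
  have col: "Ld $ i $ a - Ld $ i $ b = lam * vv i" for i
  proof -
    consider "i = a" | "i = b" | "i \<noteq> a" "i \<noteq> b" by blast
    then show ?thesis
    proof cases
      case 1 then show ?thesis using ab by (simp add: Ld_def laplacian_def lam_def vv_def)
    next
      case 2 then show ?thesis using ab deg[symmetric] symE[of b a] by (simp add: Ld_def laplacian_def lam_def vv_def)
    next
      case 3 then show ?thesis using tw[OF 3] symE by (simp add: Ld_def laplacian_def lam_def vv_def)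
    qed
  qed
  have row: "Ld $ a $ j - Ld $ b $ j = lam * vv j" for j
    using col[of j] by (simp add: Ld_sym)
  have G2: "mpow Ld k $ i $ a - mpow Ld k $ i $ b = lam ^ k * vv i" for k i
  proof (induction k arbitrary: i)
    case 0 then show ?case using ab by (auto simp: mat_def vv_def)
  next
    case (Suc k)
    have "mpow Ld (Suc k) $ i $ a - mpow Ld (Suc k) $ i $ b
        = (\<Sum>m\<in>UNIV. Ld $ i $ m * (mpow Ld k $ m $ a - mpow Ld k $ m $ b))"
      by (simp add: matrix_matrix_mult_def right_diff_distrib sum_subtractf)
    also have "\<dots> = (\<Sum>m\<in>UNIV. lam ^ k * (Ld $ i $ m * vv m))"
      by (simp add: Suc mult_ac)
    also have "\<dots> = lam ^ k * (Ld $ i $ a - Ld $ i $ b)"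
      by (simp add: sum_distrib_left[symmetric] sv)
    finally show ?case by (simp add: col)
  qed
  have G1: "mpow Ld k $ a $ j - mpow Ld k $ b $ j = lam ^ k * vv j" for k j
  proof (induction k arbitrary: j)
    case 0 then show ?case using ab by (auto simp: mat_def vv_def)
  next
    case (Suc k)
    have "mpow Ld (Suc k) $ a $ j - mpow Ld (Suc k) $ b $ j
        = (\<Sum>m\<in>UNIV. (Ld $ a $ m - Ld $ b $ m) * mpow Ld k $ m $ j)"
      by (simp add: matrix_matrix_mult_def left_diff_distrib sum_subtractf)
    also have "\<dots> = (\<Sum>m\<in>UNIV. lam * (mpow Ld k $ m $ j * vv m))"
      by (simp add: row mult_ac)
    also have "\<dots> = lam * (mpow Ld k $ a $ j - mpow Ld k $ b $ j)"
      by (simp add: sum_distrib_left[symmetric] sv)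
    finally show ?case by (simp add: Suc)
  qed
  define d where "d k = ((lam + 2 * \<alpha>) ^ k - lam ^ k) / 2" for k :: nat
  have F1: "mpow Ha k $ i $ j = mpow Ld k $ i $ j + d k * (vv i * vv j)" for k i j
  proof (induction k arbitrary: i j)
    case 0 then show ?case by (simp add: d_def)
  next
    case (Suc k)
    have s1: "(\<Sum>m\<in>UNIV. Ld $ i $ m * vv m) = lam * vv i" using sv col by simp
    have s2: "(\<Sum>m\<in>UNIV. vv m * mpow Ld k $ m $ j) = lam ^ k * vv j" using sv' G1 by simp
    have s3: "(\<Sum>m\<in>UNIV. vv m * vv m) = 2" using sv'[of vv] va vb by simp
    have "mpow Ha (Suc k) $ i $ j = (\<Sum>m\<in>UNIV. (Ld $ i $ m + \<alpha> * (vv i * vv m)) * (mpow Ld k $ m $ j + d k * (vv m * vv j)))"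
      by (simp add: matrix_matrix_mult_def Suc Ha_e)
    also have "\<dots> = (\<Sum>m\<in>UNIV. Ld $ i $ m * mpow Ld k $ m $ j)
        + d k * vv j * (\<Sum>m\<in>UNIV. Ld $ i $ m * vv m)
        + \<alpha> * vv i * (\<Sum>m\<in>UNIV. vv m * mpow Ld k $ m $ j)
        + \<alpha> * d k * vv i * vv j * (\<Sum>m\<in>UNIV. vv m * vv m)"
      by (simp add: algebra_simps sum.distrib sum_distrib_left)
    also have "\<dots> = mpow Ld (Suc k) $ i $ j + d (Suc k) * (vv i * vv j)"
      unfolding s1 s2 s3 by (simp add: matrix_matrix_mult_def d_def field_simps)
    finally show ?case .
  qed
  define z where "z = - \<i> * complex_of_real \<tau>"
  define D where "D = (exp (z * complex_of_real (lam + 2 * \<alpha>)) - exp (z * complex_of_real lam)) / 2"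
  have Dsums: "(\<lambda>k. z ^ k * complex_of_real (d k) / of_nat (fact k)) sums D"
  proof -
    have "(\<lambda>k. (z ^ k * complex_of_real ((lam + 2 * \<alpha>) ^ k) / of_nat (fact k)
              - z ^ k * complex_of_real (lam ^ k) / of_nat (fact k)) / 2) sums D"
      unfolding D_def by (intro sums_divide sums_diff exp_sums)
    then show ?thesis by (simp add: d_def diff_divide_distrib right_diff_distrib mult.commute)
  qed
  have Ua: "transition Ha \<tau> $ i $ j = transition Ld \<tau> $ i $ j + complex_of_real (vv i * vv j) * D" for i j
  proof -
    have "(\<lambda>k. z ^ k * complex_of_real (mpow Ld k $ i $ j) / of_nat (fact k)
            + complex_of_real (vv i * vv j) * (z ^ k * complex_of_real (d k) / of_nat (fact k)))
          sums (transition Ld \<tau> $ i $ j + complex_of_real (vv i * vv j) * D)"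
      by (intro sums_add sums_mult Dsums trans_entry[of \<tau> Ld i j, folded z_def])
    moreover have "(\<lambda>k. z ^ k * complex_of_real (mpow Ha k $ i $ j) / of_nat (fact k)) sums (transition Ha \<tau> $ i $ j)"
      using trans_entry[of \<tau> Ha i j, folded z_def] .
    ultimately show ?thesis
      by (simp add: F1 algebra_simps add_divide_distrib sums_unique2)
  qed
  have Udiff: "transition Ld \<tau> $ i $ j - transition Ld \<tau> $ i' $ j' = exp (z * complex_of_real lam) * complex_of_real c"
    if "\<And>k. mpow Ld k $ i $ j - mpow Ld k $ i' $ j' = lam ^ k * c" for i j i' j' c
  proof -
    have "(\<lambda>k. z ^ k * complex_of_real (mpow Ld k $ i $ j) / of_nat (fact k)
            - z ^ k * complex_of_real (mpow Ld k $ i' $ j') / of_nat (fact k))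
          sums (transition Ld \<tau> $ i $ j - transition Ld \<tau> $ i' $ j')"
      by (intro sums_diff trans_entry[of \<tau> Ld i j, folded z_def] trans_entry[of \<tau> Ld i' j', folded z_def])
    moreover have "(\<lambda>k. z ^ k * complex_of_real (lam ^ k) / of_nat (fact k) * complex_of_real c)
          sums (exp (z * complex_of_real lam) * complex_of_real c)"
      by (intro sums_mult2 exp_sums)
    moreover have "z ^ k * complex_of_real (mpow Ld k $ i $ j) / of_nat (fact k)
            - z ^ k * complex_of_real (mpow Ld k $ i' $ j') / of_nat (fact k)
          = z ^ k * complex_of_real (lam ^ k) / of_nat (fact k) * complex_of_real c" for k
    proof -
      have "complex_of_real (mpow Ld k $ i $ j) - complex_of_real (mpow Ld k $ i' $ j') = complex_of_real (lam ^ k * c)"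
        using that[of k] by (metis of_real_diff)
      then show ?thesis by (simp add: diff_divide_distrib[symmetric] right_diff_distrib[symmetric])
    qed
    ultimately show ?thesis by (simp add: sums_unique2)
  qed
  show ?thesis
    unfolding Ha_def[symmetric]
  proof (intro conjI impI)
    assume "p \<notin> {a, b}"
    then have "vv p = 0" by (simp add: vv_def)
    then show "periodic_at Ha p \<tau>" using assms(5) Ua[of p p]
      by (simp add: periodic_at_def Ld_def)
  next
    assume h: "p \<in> {a, b} \<and> (\<exists>k::int. 2 * \<alpha> * \<tau> = pi * (2 * k + 1))"
    then obtain k :: int where k: "2 * \<alpha> * \<tau> = pi * (2 * real_of_int k + 1)" by blast
    have "exp (z * complex_of_real (2 * \<alpha>)) = -1"
    proof -
      have "z * complex_of_real (2 * \<alpha>) = - (\<i> * complex_of_real (2 * \<alpha> * \<tau>))"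
        by (simp add: z_def mult_ac)
      then show ?thesis using odd_exp[OF k] by (simp only:)
    qed
    then have "exp (z * complex_of_real (lam + 2 * \<alpha>)) = - exp (z * complex_of_real lam)"
      by (simp add: distrib_left exp_add)
    then have DD: "D = - exp (z * complex_of_real lam)" by (simp add: D_def)
    have UHab: "transition Ha \<tau> $ a $ b = transition Ld \<tau> $ a $ b + exp (z * complex_of_real lam)"
      using Ua[of a b] by (simp add: va vb DD)
    have e1: "transition Ld \<tau> $ a $ a - transition Ld \<tau> $ a $ b = exp (z * complex_of_real lam) * complex_of_real 1"
      by (rule Udiff) (use G2 va in simp)
    have e2: "transition Ld \<tau> $ a $ b - transition Ld \<tau> $ b $ b = exp (z * complex_of_real lam) * complex_of_real (-1)"
      by (rule Udiff) (use G1 vb in simp)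
    from h consider "p = a" | "p = b" by blast
    then show "pst Ha a b \<tau>"
    proof cases
      case 1
      have "transition Ha \<tau> $ a $ b = transition Ld \<tau> $ a $ a" using UHab e1 by (simp add: algebra_simps)
      then show ?thesis using assms(5) 1 by (simp add: pst_def periodic_at_def Ld_def)
    next
      case 2
      have "transition Ha \<tau> $ a $ b = transition Ld \<tau> $ b $ b" using UHab e2 by (simp add: algebra_simps)
      then show ?thesis using assms(5) 2 by (simp add: pst_def periodic_at_def Ld_def)
    qed
  qed
qed

end
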